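(* Let $G$ be a locally compact, $\sigma$-compact (Hausdorff) group. If $K$ is a torsion-free discrete subgroup of $G$ that satisfies the strong Atiyah conjecture, then each nonzero function $f \in L^2(G)$ has linearly independent left $K$-translations; that is, whenever $k_1,\dots,k_n \in K$ are distinct and $c_1,\dots,c_n \in \mathbb{C}$ are not all zero, $\sum_{j=1}^n c_j L(k_j) f \neq 0$.
   Context: $L^2(G)$ is taken with respect to a left Haar measure, and $L(k)f(x) = f(k^{-1}x)$. A group is torsion-free if its only element of finite order is the identity. For a torsion-free discrete group $K$, the strong Atiyah conjecture for $K$ asserts: for every $m \times n$ matrix $A$ over the group ring $\mathbb{C}K$, the von Neumann dimension (over the group von Neumann algebra $\mathcal{N}(K)$) of the kernel of the bounded operator $\ell^2(K)^n \to \ell^2(K)^m$ given by left multiplication (convolution) by $A$ is an integer. *)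

theory Defs
  imports "HOL-Analysis.Analysis"
begin

(* The group G is a type 'g of class topological_group_add (a possibly
   non-commutative topological group, written additively: group law (+),
   inverse uminus, identity 0).  So k^{-1} x is written  -k + x. *)

definition sigma_compact_type :: "'a::topological_space itself \<Rightarrow> bool" where
  "sigma_compact_type _ \<longleftrightarrow>
     (\<exists>C :: nat \<Rightarrow> 'a set. (\<forall>n. compact (C n)) \<and> (\<Union>n. C n) = UNIV)"

definition left_haar_measure :: "'g::{topological_group_add,t2_space} measure \<Rightarrow> bool" where
  "left_haar_measure \<mu> \<longleftrightarrow>
     sets \<mu> = sets borel \<and>
     (\<forall>g A. A \<in> sets borel \<longrightarrow> emeasure \<mu> ((\<lambda>x. g + x) ` A) = emeasure \<mu> A) \<and>
     (\<forall>C. compact C \<longrightarrow> emeasure \<mu> C < \<infinity>) \<and>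
     (\<forall>U. open U \<and> U \<noteq> {} \<longrightarrow> emeasure \<mu> U > 0) \<and>
     (\<forall>A \<in> sets borel. emeasure \<mu> A = (INF U \<in> {U. open U \<and> A \<subseteq> U}. emeasure \<mu> U)) \<and>
     (\<forall>U. open U \<longrightarrow> emeasure \<mu> U = (SUP C \<in> {C. compact C \<and> C \<subseteq> U}. emeasure \<mu> C))"

definition is_subgroup :: "'g::group_add set \<Rightarrow> bool" where
  "is_subgroup K \<longleftrightarrow> 0 \<in> K \<and> (\<forall>a\<in>K. \<forall>b\<in>K. a + b \<in> K) \<and> (\<forall>a\<in>K. - a \<in> K)"

definition discrete_subset :: "'g::topological_space set \<Rightarrow> bool" where
  "discrete_subset K \<longleftrightarrow> (\<forall>k\<in>K. \<exists>U. open U \<and> U \<inter> K = {k})"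

definition torsion_free :: "'g::group_add set \<Rightarrow> bool" where
  "torsion_free K \<longleftrightarrow>
     (\<forall>k\<in>K. \<forall>n::nat. n > 0 \<and> ((\<lambda>x. x + k) ^^ n) 0 = 0 \<longrightarrow> k = 0)"

definition group_ring :: "'g set \<Rightarrow> ('g \<Rightarrow> complex) set" where
  "group_ring K = {a. finite {g. a g \<noteq> 0} \<and> {g. a g \<noteq> 0} \<subseteq> K}"

(* l^2(K)^n, elements represented as functions on K x {0..<n} (zero elsewhere) *)
definition l2n :: "'g set \<Rightarrow> nat \<Rightarrow> ('g \<times> nat \<Rightarrow> complex) set" where
  "l2n K n = {\<xi>. (\<forall>x i. \<xi> (x, i) \<noteq> 0 \<longrightarrow> x \<in> K \<and> i < n) \<and>
                 (\<lambda>p. (cmod (\<xi> p))\<^sup>2) summable_on UNIV}"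

definition l2_inner :: "('a \<Rightarrow> complex) \<Rightarrow> ('a \<Rightarrow> complex) \<Rightarrow> complex" where
  "l2_inner \<xi> \<eta> = (\<Sum>\<^sub>\<infinity>p. \<xi> p * cnj (\<eta> p))"

definition orth_proj :: "('a \<Rightarrow> complex) set \<Rightarrow> ('a \<Rightarrow> complex) \<Rightarrow> ('a \<Rightarrow> complex)" where
  "orth_proj V \<xi> = (THE w. w \<in> V \<and> (\<forall>u\<in>V. l2_inner (\<lambda>p. \<xi> p - w p) u = 0))"

(* left multiplication (convolution) by an m x n matrix A over CK,
   (A xi)_i = sum_j a_ij * xi_j,  (a * xi)(x) = sum_g a(g) xi(g^{-1} x) *)
definition mat_mult :: "(nat \<Rightarrow> nat \<Rightarrow> 'g::group_add \<Rightarrow> complex) \<Rightarrow> nat \<Rightarrow>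
                        ('g \<times> nat \<Rightarrow> complex) \<Rightarrow> ('g \<times> nat \<Rightarrow> complex)" where
  "mat_mult A n \<xi> = (\<lambda>(x, i). \<Sum>j<n. \<Sum>g\<in>{g. A i j g \<noteq> 0}. A i j g * \<xi> (- g + x, j))"

definition mat_kernel :: "'g::group_add set \<Rightarrow> (nat \<Rightarrow> nat \<Rightarrow> 'g \<Rightarrow> complex) \<Rightarrow> nat \<Rightarrow> nat \<Rightarrow>
                          ('g \<times> nat \<Rightarrow> complex) set" where
  "mat_kernel K A m n = {\<xi> \<in> l2n K n. \<forall>x\<in>K. \<forall>i<m. mat_mult A n \<xi> (x, i) = 0}"

definition delta_vec :: "nat \<Rightarrow> ('g::zero \<times> nat \<Rightarrow> complex)" where
  "delta_vec i = (\<lambda>p. if p = (0, i) then 1 else 0)"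

(* von Neumann dimension over N(K) of a closed invariant subspace V of l^2(K)^n:
   trace of the orthogonal projection, sum_i <P delta_{1} e_i, delta_{1} e_i> *)
definition vn_dim :: "nat \<Rightarrow> ('g::zero \<times> nat \<Rightarrow> complex) set \<Rightarrow> real" where
  "vn_dim n V = (\<Sum>i<n. Re (l2_inner (orth_proj V (delta_vec i)) (delta_vec i)))"

definition strong_atiyah :: "'g::group_add set \<Rightarrow> bool" where
  "strong_atiyah K \<longleftrightarrow>
     (\<forall>m n (A :: nat \<Rightarrow> nat \<Rightarrow> 'g \<Rightarrow> complex).
        (\<forall>i<m. \<forall>j<n. A i j \<in> group_ring K) \<longrightarrow> vn_dim n (mat_kernel K A m n) \<in> \<int>)"

end

theory Submission
  imports Defs
begin

definition sqs :: "('a \<Rightarrow> complex) \<Rightarrow> bool" where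
  "sqs x \<longleftrightarrow> (\<lambda>p. (cmod (x p))\<^sup>2) summable_on UNIV"

definition nrm :: "('a \<Rightarrow> complex) \<Rightarrow> real" where
  "nrm x = infsum (\<lambda>p. (cmod (x p))\<^sup>2) UNIV"

lemma sqs_add:
  assumes "sqs x" "sqs y" shows "sqs (\<lambda>p. x p + y p)"
proof -
  have "(\<lambda>p. 2 * (cmod (x p))\<^sup>2 + 2 * (cmod (y p))\<^sup>2) summable_on UNIV"
    using assms unfolding sqs_def
    by (intro summable_on_add summable_on_cmult_right) auto
  moreover have "(cmod (x p + y p))\<^sup>2 \<le> 2 * (cmod (x p))\<^sup>2 + 2 * (cmod (y p))\<^sup>2" for p
  proof -
    have "cmod (x p + y p) \<le> cmod (x p) + cmod (y p)" by (rule norm_triangle_ineq)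
    hence "(cmod (x p + y p))\<^sup>2 \<le> (cmod (x p) + cmod (y p))\<^sup>2"
      by (simp add: power_mono)
    also have "\<dots> \<le> 2 * (cmod (x p))\<^sup>2 + 2 * (cmod (y p))\<^sup>2"
      using sum_squares_bound[of "cmod (x p)" "cmod (y p)"] by (simp add: power2_sum)
    finally show ?thesis .
  qed
  ultimately show ?thesis unfolding sqs_def
    by (rule summable_on_comparison_test) auto
qed

lemma sqs_scale:
  assumes "sqs x" shows "sqs (\<lambda>p. c * x p)"
proof -
  have "(\<lambda>p. (cmod c)\<^sup>2 * (cmod (x p))\<^sup>2) summable_on UNIV"
    using assms unfolding sqs_def by (intro summable_on_cmult_right) auto
  thus ?thesis unfolding sqs_def by (simp add: norm_mult power_mult_distrib)
qed

lemma sqs_diff: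
  assumes "sqs x" "sqs y" shows "sqs (\<lambda>p. x p - y p)"
proof -
  have "sqs (\<lambda>p. x p + (-1) * y p)" using assms sqs_add sqs_scale by blast
  thus ?thesis by simp
qed

lemma sqs_zero: "sqs (\<lambda>_. 0)" unfolding sqs_def by simp

lemma inner_summable:
  assumes "sqs x" "sqs y" shows "(\<lambda>p. x p * cnj (y p)) summable_on UNIV"
proof -
  have "(\<lambda>p. (cmod (x p))\<^sup>2 + (cmod (y p))\<^sup>2) summable_on UNIV"
    using assms unfolding sqs_def by (intro summable_on_add) auto
  moreover have "norm (x p * cnj (y p)) \<le> (cmod (x p))\<^sup>2 + (cmod (y p))\<^sup>2" for p
  proof -
    have "norm (x p * cnj (y p)) = cmod (x p) * cmod (y p)" by (simp add: norm_mult)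
    also have "\<dots> \<le> (cmod (x p))\<^sup>2 + (cmod (y p))\<^sup>2"
      using sum_squares_bound[of "cmod (x p)" "cmod (y p)"] norm_ge_zero[of "x p"] norm_ge_zero[of "y p"]
        mult_nonneg_nonneg[of "cmod (x p)" "cmod (y p)"] by linarith
    finally show ?thesis .
  qed
  ultimately have "(\<lambda>p. norm (x p * cnj (y p))) summable_on UNIV"
    by (rule summable_on_comparison_test) auto
  thus ?thesis by (rule abs_summable_summable)
qed

lemma nrm_nonneg: "nrm x \<ge> 0"
  unfolding nrm_def by (rule infsum_nonneg) auto

lemma inner_self: assumes "sqs x" shows "l2_inner x x = of_real (nrm x)"
proof -
  have "((\<lambda>p. (cmod (x p))\<^sup>2) has_sum nrm x) UNIV"
    using assms unfolding sqs_def nrm_def by (rule has_sum_infsum)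
  hence "((\<lambda>p. complex_of_real ((cmod (x p))\<^sup>2)) has_sum of_real (nrm x)) UNIV"
    by (rule has_sum_of_real)
  moreover have "\<And>p. complex_of_real ((cmod (x p))\<^sup>2) = x p * cnj (x p)"
    by (simp add: complex_mult_cnj cmod_def)
  ultimately show ?thesis unfolding l2_inner_def by (simp add: infsumI)
qed

lemma inner_cnj: "l2_inner y x = cnj (l2_inner x y)"
  unfolding l2_inner_def by (simp flip: infsum_cnj add: mult.commute)

lemma inner_add_left:
  assumes "sqs x" "sqs y" "sqs z"
  shows "l2_inner (\<lambda>p. x p + y p) z = l2_inner x z + l2_inner y z"
  unfolding l2_inner_def using inner_summable[OF assms(1,3)] inner_summable[OF assms(2,3)]
  by (simp add: distrib_right infsum_add)

lemma inner_scale_left: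
  assumes "sqs x" "sqs z"
  shows "l2_inner (\<lambda>p. c * x p) z = c * l2_inner x z"
  unfolding l2_inner_def using inner_summable[OF assms]
  by (simp add: mult.assoc infsum_cmult_right)

lemma inner_diff_left:
  assumes "sqs x" "sqs y" "sqs z"
  shows "l2_inner (\<lambda>p. x p - y p) z = l2_inner x z - l2_inner y z"
proof -
  have "l2_inner (\<lambda>p. x p + (-1) * y p) z = l2_inner x z + l2_inner (\<lambda>p. (-1) * y p) z"
    using assms sqs_scale[of y "-1"] by (intro inner_add_left) auto
  also have "l2_inner (\<lambda>p. (-1) * y p) z = - l2_inner y z"
    using inner_scale_left[OF assms(2,3), of "-1"] by simp
  finally show ?thesis by simp
qed

lemma inner_add_right:
  assumes "sqs x" "sqs y" "sqs z"
  shows "l2_inner z (\<lambda>p. x p + y p) = l2_inner z x + l2_inner z y"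
  by (metis assms inner_add_left inner_cnj complex_cnj_add)

lemma inner_diff_right:
  assumes "sqs x" "sqs y" "sqs z"
  shows "l2_inner z (\<lambda>p. x p - y p) = l2_inner z x - l2_inner z y"
  by (metis assms inner_diff_left inner_cnj complex_cnj_diff)

lemma inner_scale_right:
  assumes "sqs x" "sqs z"
  shows "l2_inner z (\<lambda>p. c * x p) = cnj c * l2_inner z x"
  by (metis assms inner_scale_left inner_cnj complex_cnj_mult complex_cnj_cnj)

lemma nrm_point: assumes "sqs x" shows "(cmod (x p))\<^sup>2 \<le> nrm x"
proof -
  have "infsum (\<lambda>p. (cmod (x p))\<^sup>2) {p} \<le> infsum (\<lambda>p. (cmod (x p))\<^sup>2) UNIV"
    using assms unfolding sqs_def by (intro infsum_mono_neutral) auto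
  thus ?thesis unfolding nrm_def by simp
qed

lemma nrm_zero_iff: assumes "sqs x" "nrm x = 0" shows "x p = 0"
  using nrm_point[OF assms(1), of p] assms(2) by simp

lemma nrm_scale: assumes "sqs x" shows "nrm (\<lambda>p. c * x p) = (cmod c)\<^sup>2 * nrm x"
  unfolding nrm_def using assms unfolding sqs_def
  by (simp add: norm_mult power_mult_distrib infsum_cmult_right)

lemma nrm_inner: assumes "sqs x" shows "nrm x = Re (l2_inner x x)"
  using inner_self[OF assms] by simp

lemma parallelogram:
  assumes "sqs x" "sqs y"
  shows "nrm (\<lambda>p. x p + y p) + nrm (\<lambda>p. x p - y p) = 2 * nrm x + 2 * nrm y"
proof -
  have s1: "sqs (\<lambda>p. x p + y p)" "sqs (\<lambda>p. x p - y p)" using assms sqs_add sqs_diff by auto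
  have "l2_inner (\<lambda>p. x p + y p) (\<lambda>p. x p + y p) =
        l2_inner x x + l2_inner x y + l2_inner y x + l2_inner y y"
    using assms s1 by (simp add: inner_add_left inner_add_right)
  moreover have "l2_inner (\<lambda>p. x p - y p) (\<lambda>p. x p - y p) =
        l2_inner x x - l2_inner x y - l2_inner y x + l2_inner y y"
    using assms s1 by (simp add: inner_diff_left inner_diff_right)
  ultimately show ?thesis using assms s1 by (simp add: nrm_inner)
qed

lemma sum_le_nrm:
  assumes "sqs x" "finite F" shows "(\<Sum>p\<in>F. (cmod (x p))\<^sup>2) \<le> nrm x"
proof -
  have "infsum (\<lambda>p. (cmod (x p))\<^sup>2) F \<le> infsum (\<lambda>p. (cmod (x p))\<^sup>2) UNIV"
    using assms unfolding sqs_def by (intro infsum_mono_neutral) auto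
  thus ?thesis using assms(2) unfolding nrm_def by simp
qed

lemma proj_exists:
  fixes V :: "('a \<Rightarrow> complex) set" and \<delta> :: "'a \<Rightarrow> complex"
  assumes sqV: "\<And>v. v \<in> V \<Longrightarrow> sqs v"
    and zeroV: "(\<lambda>_. 0) \<in> V"
    and addV: "\<And>u v. u \<in> V \<Longrightarrow> v \<in> V \<Longrightarrow> (\<lambda>p. u p + v p) \<in> V"
    and scaleV: "\<And>c v. v \<in> V \<Longrightarrow> (\<lambda>p. c * v p) \<in> V"
    and closedV: "\<And>s w. (\<And>n. s n \<in> V) \<Longrightarrow> (\<And>p. (\<lambda>n. s n p) \<longlonglongrightarrow> w p) \<Longrightarrow> sqs w \<Longrightarrow> w \<in> V"
    and sd: "sqs \<delta>"
  shows "\<exists>w\<in>V. \<forall>u\<in>V. l2_inner (\<lambda>p. \<delta> p - w p) u = 0"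
proof -
  define D where "D = (\<lambda>v. nrm (\<lambda>p. \<delta> p - v p)) ` V"
  define d where "d = Inf D"
  have Dne: "D \<noteq> {}" using zeroV unfolding D_def by auto
  have Dbdd: "bdd_below D" unfolding D_def by (rule bdd_belowI[of _ 0]) (auto simp: nrm_nonneg)
  have dle: "d \<le> nrm (\<lambda>p. \<delta> p - v p)" if "v \<in> V" for v
    unfolding d_def using that Dbdd by (intro cInf_lower) (auto simp: D_def)
  have d0: "d \<ge> 0" unfolding d_def using Dne by (intro cInf_greatest) (auto simp: D_def nrm_nonneg)
  have "\<exists>v\<in>V. nrm (\<lambda>p. \<delta> p - v p) < d + inverse (real (Suc n))" for n
  proof -
    have "Inf D < d + inverse (real (Suc n))" unfolding d_def by simp
    then obtain y where "y \<in> D" "y < d + inverse (real (Suc n))"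
      using cInf_less_iff[OF Dne Dbdd] by blast
    thus ?thesis unfolding D_def by auto
  qed
  then obtain s where sV: "\<And>n. s n \<in> V"
    and sb: "\<And>n. nrm (\<lambda>p. \<delta> p - s n p) < d + inverse (real (Suc n))"
    by metis
  have subV: "(\<lambda>p. u p - v p) \<in> V" if "u \<in> V" "v \<in> V" for u v
  proof -
    have "(\<lambda>p. u p + (-1) * v p) \<in> V" using that addV scaleV by blast
    thus ?thesis by simp
  qed
  have ssq: "\<And>n. sqs (s n)" using sV sqV by blast
  have cest: "nrm (\<lambda>p. s m p - s n p) \<le> 2 * inverse (real (Suc n)) + 2 * inverse (real (Suc m))" for m n
  proof -
    define x where "x = (\<lambda>p. \<delta> p - s n p)"
    define y where "y = (\<lambda>p. \<delta> p - s m p)"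
    define mid where "mid = (\<lambda>p. (1/2) * (s n p + s m p))"
    have xs: "sqs x" "sqs y" unfolding x_def y_def using sd ssq sqs_diff by auto
    have midV: "mid \<in> V" unfolding mid_def using sV addV scaleV by blast
    have "(\<lambda>p. x p + y p) = (\<lambda>p. 2 * (\<delta> p - mid p))"
      unfolding x_def y_def mid_def by (auto simp: algebra_simps)
    hence "nrm (\<lambda>p. x p + y p) = nrm (\<lambda>p. 2 * (\<delta> p - mid p))" by (simp only:)
    also have "\<dots> = (cmod 2)\<^sup>2 * nrm (\<lambda>p. \<delta> p - mid p)"
      by (rule nrm_scale[OF sqs_diff[OF sd sqV[OF midV]]])
    also have "\<dots> = 4 * nrm (\<lambda>p. \<delta> p - mid p)" by simp
    also have "\<dots> \<ge> 4 * d" using dle[OF midV] by simp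
    finally have a: "nrm (\<lambda>p. x p + y p) \<ge> 4 * d" .
    have e: "(\<lambda>p. x p - y p) = (\<lambda>p. s m p - s n p)" unfolding x_def y_def by auto
    have bx: "nrm x < d + inverse (real (Suc n))" using sb[of n] unfolding x_def .
    have by': "nrm y < d + inverse (real (Suc m))" using sb[of m] unfolding y_def .
    have "nrm (\<lambda>p. s m p - s n p) = 2 * nrm x + 2 * nrm y - nrm (\<lambda>p. x p + y p)"
      using parallelogram[OF xs] e by simp
    with a bx by' show ?thesis by linarith
  qed
  have cau: "Cauchy (\<lambda>n. s n p)" for p
  proof (rule CauchyI)
    fix e :: real assume e: "e > 0"
    obtain N where N: "inverse (real (Suc N)) < e\<^sup>2 / 4"
      using reals_Archimedean e by (metis divide_pos_pos zero_less_numeral zero_less_power)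
    show "\<exists>M. \<forall>m\<ge>M. \<forall>n\<ge>M. norm (s m p - s n p) < e"
    proof (intro exI allI impI)
      fix m n assume mn: "N \<le> m" "N \<le> n"
      have im: "inverse (real (Suc m)) \<le> inverse (real (Suc N))"
        "inverse (real (Suc n)) \<le> inverse (real (Suc N))"
        using mn by (auto simp: field_simps)
      have "(norm (s m p - s n p))\<^sup>2 \<le> nrm (\<lambda>p. s m p - s n p)"
        using nrm_point[of "\<lambda>p. s m p - s n p" p] ssq sqs_diff by auto
      also have "\<dots> < e\<^sup>2" using cest[of m n] im N by linarith
      finally have h: "(norm (s m p - s n p))\<^sup>2 < e\<^sup>2" .
      show "norm (s m p - s n p) < e"
        using power2_less_imp_less[OF h] e by simp
    qed
  qed
  define w where "w = (\<lambda>p. lim (\<lambda>n. s n p))"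
  have lw: "(\<lambda>n. s n p) \<longlonglongrightarrow> w p" for p
    unfolding w_def using cau[of p] by (simp add: Cauchy_convergent_iff convergent_LIMSEQ_iff)
  have fin: "(\<Sum>p\<in>F. (cmod (\<delta> p - w p))\<^sup>2) \<le> d" if "finite F" for F
  proof -
    have "(\<lambda>n. \<Sum>p\<in>F. (cmod (\<delta> p - s n p))\<^sup>2) \<longlonglongrightarrow> (\<Sum>p\<in>F. (cmod (\<delta> p - w p))\<^sup>2)"
      by (intro tendsto_intros lw)
    moreover have "(\<lambda>n. d + inverse (real (Suc n))) \<longlonglongrightarrow> d"
      by (rule LIMSEQ_inverse_real_of_nat_add)
    moreover have "\<forall>n\<ge>0. (\<Sum>p\<in>F. (cmod (\<delta> p - s n p))\<^sup>2) \<le> d + inverse (real (Suc n))"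
      using sum_le_nrm[OF sqs_diff[OF sd ssq] that] sb less_imp_le order_trans by blast
    ultimately show ?thesis by (intro LIMSEQ_le) auto
  qed
  have sqdw: "sqs (\<lambda>p. \<delta> p - w p)"
    unfolding sqs_def
    by (rule nonneg_bdd_above_summable_on) (auto intro!: bdd_aboveI[of _ d] fin)
  have ndw: "nrm (\<lambda>p. \<delta> p - w p) \<le> d"
    unfolding nrm_def using sqdw unfolding sqs_def
    by (intro infsum_le_finite_sums fin) auto
  have sqw: "sqs w"
  proof -
    have "sqs (\<lambda>p. \<delta> p - (\<delta> p - w p))" using sd sqdw by (rule sqs_diff)
    thus ?thesis by simp
  qed
  have wV: "w \<in> V" using closedV[OF sV lw sqw] .
  have minw: "nrm (\<lambda>p. \<delta> p - w p) \<le> nrm (\<lambda>p. \<delta> p - v p)" if "v \<in> V" for v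
    using ndw dle[OF that] by linarith
  show ?thesis
  proof (rule bexI[OF _ wV], intro ballI)
    fix u assume uV: "u \<in> V"
    define x where "x = (\<lambda>p. \<delta> p - w p)"
    define z where "z = l2_inner x u"
    define q where "q = (cmod z)\<^sup>2"
    define r where "r = inverse (nrm u + 1)"
    define t where "t = of_real r * z"
    have sx: "sqs x" unfolding x_def by (rule sqdw)
    have su: "sqs u" using sqV uV .
    have stu: "sqs (\<lambda>p. t * u p)" using su by (rule sqs_scale)
    have r0: "r > 0" unfolding r_def using nrm_nonneg[of u] by simp
    have r1: "r * nrm u \<le> 1"
      unfolding r_def using nrm_nonneg[of u] by (simp add: field_simps)
    have vV: "(\<lambda>p. w p + t * u p) \<in> V" using wV uV addV scaleV by blast
    have eqf: "(\<lambda>p. \<delta> p - (w p + t * u p)) = (\<lambda>p. x p - t * u p)"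
      unfolding x_def by (auto simp: algebra_simps)
    have "l2_inner (\<lambda>p. x p - t * u p) (\<lambda>p. x p - t * u p) =
          l2_inner x x - cnj t * l2_inner x u - t * l2_inner u x + t * cnj t * l2_inner u u"
      using sx su stu sqs_diff[OF sx stu]
      by (simp add: inner_diff_left inner_diff_right inner_scale_left inner_scale_right algebra_simps)
    also have "l2_inner u x = cnj z" unfolding z_def by (rule inner_cnj)
    finally have e1: "l2_inner (\<lambda>p. x p - t * u p) (\<lambda>p. x p - t * u p) =
          l2_inner x x - cnj t * z - t * cnj z + t * cnj t * l2_inner u u"
      unfolding z_def .
    have zz: "z * cnj z = of_real q" unfolding q_def by (simp add: complex_mult_cnj cmod_def)
    have "cnj t * z = of_real (r * q)" "t * cnj z = of_real (r * q)"
      "t * cnj t = of_real (r * r * q)"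
      unfolding t_def using zz by (auto simp: algebra_simps)
    with e1 have "nrm (\<lambda>p. x p - t * u p) = nrm x - 2 * (r * q) + r * r * q * nrm u"
      using sqs_diff[OF sx stu] sx su by (simp add: nrm_inner)
    moreover have "nrm x \<le> nrm (\<lambda>p. x p - t * u p)"
      using minw[OF vV] eqf unfolding x_def by simp
    ultimately have "2 * (r * q) \<le> r * (r * nrm u * q)" by (simp add: algebra_simps)
    also have "\<dots> \<le> r * q" using r1 r0 unfolding q_def
      by (intro mult_left_mono) (use mult_right_mono[OF r1, of "(cmod z)\<^sup>2"] in auto)
    finally have "q \<le> 0" using r0 unfolding q_def
      by (smt (verit) zero_le_power2 mult_pos_pos mult_nonneg_nonneg)
    hence "z = 0" unfolding q_def by simp
    thus "l2_inner (\<lambda>p. \<delta> p - w p) u = 0" unfolding z_def x_def .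
  qed
qed

lemma sqs_delta: "sqs (delta_vec i :: 'g::zero \<times> nat \<Rightarrow> complex)"
proof -
  have e: "(\<lambda>p. (cmod (delta_vec i p))\<^sup>2) = (\<lambda>p::'g \<times> nat. if p = (0, i) then 1 else 0)"
    by (auto simp: delta_vec_def fun_eq_iff)
  have "(\<lambda>p::'g \<times> nat. if p = (0, i) then 1 else (0::real)) summable_on UNIV"
    by (rule nonneg_bdd_above_summable_on) (auto intro!: bdd_aboveI[of _ 1] simp: sum.delta)
  thus ?thesis unfolding sqs_def e .
qed

lemma inner_delta: "l2_inner \<xi> (delta_vec i :: 'g::zero \<times> nat \<Rightarrow> complex) = \<xi> (0, i)"
proof -
  have "l2_inner \<xi> (delta_vec i) = infsum (\<lambda>p. \<xi> p * cnj (delta_vec i p)) {(0::'g, i)}"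
    unfolding l2_inner_def
    by (rule infsum_cong_neutral) (auto simp: delta_vec_def)
  thus ?thesis by (simp add: delta_vec_def)
qed

lemma delta_inner: "l2_inner (delta_vec i :: 'g::zero \<times> nat \<Rightarrow> complex) \<xi> = cnj (\<xi> (0, i))"
  by (simp add: inner_cnj[of "delta_vec i"] inner_delta)

lemma mat_mult_11: "mat_mult (\<lambda>_ _. a) 1 \<xi> (x, 0) = (\<Sum>g\<in>{g. a g \<noteq> 0}. a g * \<xi> (- g + x, 0))"
  unfolding mat_mult_def by simp

lemma memV:
  "\<xi> \<in> mat_kernel K (\<lambda>_ _. a) 1 1 \<longleftrightarrow>
   (\<forall>x i. \<xi> (x, i) \<noteq> 0 \<longrightarrow> x \<in> K \<and> i = 0) \<and> sqs \<xi> \<and>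
   (\<forall>x\<in>K. mat_mult (\<lambda>_ _. a) 1 \<xi> (x, 0) = 0)"
  unfolding mat_kernel_def l2n_def sqs_def by auto

lemma kernel_props:
  fixes K :: "'g::group_add set" and a :: "'g \<Rightarrow> complex"
  defines "V \<equiv> mat_kernel K (\<lambda>_ _. a) 1 1"
  shows kp_sq: "\<And>v. v \<in> V \<Longrightarrow> sqs v"
    and kp_zero: "(\<lambda>_. 0) \<in> V"
    and kp_add: "\<And>u v. u \<in> V \<Longrightarrow> v \<in> V \<Longrightarrow> (\<lambda>p. u p + v p) \<in> V"
    and kp_scale: "\<And>c v. v \<in> V \<Longrightarrow> (\<lambda>p. c * v p) \<in> V"
    and kp_closed: "\<And>s w. (\<And>n. s n \<in> V) \<Longrightarrow> (\<And>p. (\<lambda>n. s n p) \<longlonglongrightarrow> w p) \<Longrightarrow> sqs w \<Longrightarrow> w \<in> V"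
proof -
  show "\<And>v. v \<in> V \<Longrightarrow> sqs v" unfolding V_def memV by blast
  show "(\<lambda>_. 0) \<in> V" unfolding V_def memV by (simp add: mat_mult_def sqs_zero)
  show "(\<lambda>p. u p + v p) \<in> V" if uv: "u \<in> V" "v \<in> V" for u v
  proof -
    note U = uv(1)[unfolded V_def memV] and W = uv(2)[unfolded V_def memV]
    have "sqs (\<lambda>p. u p + v p)" using U W by (intro sqs_add) blast+
    moreover have "mat_mult (\<lambda>_ _. a) 1 (\<lambda>p. u p + v p) (x, 0) =
       mat_mult (\<lambda>_ _. a) 1 u (x, 0) + mat_mult (\<lambda>_ _. a) 1 v (x, 0)" for x
      unfolding mat_mult_11 by (simp add: distrib_left sum.distrib)
    moreover have "x \<in> K \<and> i = 0" if "u (x, i) + v (x, i) \<noteq> 0" for x i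
    proof -
      have "u (x, i) \<noteq> 0 \<or> v (x, i) \<noteq> 0" using that by auto
      thus ?thesis using U W by blast
    qed
    ultimately show ?thesis unfolding V_def memV using U W by simp
  qed
  show "(\<lambda>p. c * v p) \<in> V" if uv: "v \<in> V" for c v
  proof -
    note W = uv[unfolded V_def memV]
    have "sqs (\<lambda>p. c * v p)" using W by (intro sqs_scale) blast
    moreover have "mat_mult (\<lambda>_ _. a) 1 (\<lambda>p. c * v p) (x, 0) = c * mat_mult (\<lambda>_ _. a) 1 v (x, 0)" for x
      unfolding mat_mult_11 by (simp add: sum_distrib_left algebra_simps)
    moreover have "x \<in> K \<and> i = 0" if "c * v (x, i) \<noteq> 0" for x i
    proof -
      have "v (x, i) \<noteq> 0" using that by auto
      thus ?thesis using W by blast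
    qed
    ultimately show ?thesis unfolding V_def memV using W by (simp; blast)
  qed
  show "w \<in> V" if sV: "\<And>n. s n \<in> V" and lw: "\<And>p. (\<lambda>n. s n p) \<longlonglongrightarrow> w p" and sw: "sqs w" for s w
  proof -
    note S = sV[unfolded V_def memV]
    have supp: "x \<in> K \<and> i = 0" if "w (x, i) \<noteq> 0" for x i
    proof (rule ccontr)
      assume "\<not> (x \<in> K \<and> i = 0)"
      hence "\<And>n. s n (x, i) = 0" using S by blast
      hence "(\<lambda>n. s n (x, i)) \<longlonglongrightarrow> 0" by simp
      hence "w (x, i) = 0" using lw LIMSEQ_unique by blast
      thus False using that by simp
    qed
    have "mat_mult (\<lambda>_ _. a) 1 w (x, 0) = 0" if "x \<in> K" for x
    proof -
      have l: "(\<lambda>n. mat_mult (\<lambda>_ _. a) 1 (s n) (x, 0)) \<longlonglongrightarrow> mat_mult (\<lambda>_ _. a) 1 w (x, 0)"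
        unfolding mat_mult_11 by (intro tendsto_intros lw)
      have "\<And>n. mat_mult (\<lambda>_ _. a) 1 (s n) (x, 0) = 0"
        using S that by blast
      hence "(\<lambda>n. 0::complex) \<longlonglongrightarrow> mat_mult (\<lambda>_ _. a) 1 w (x, 0)" using l by simp
      thus ?thesis using LIMSEQ_unique[OF tendsto_const] by metis
    qed
    thus ?thesis unfolding V_def memV using supp sw by blast
  qed
qed

lemma atiyah_kernel:
  fixes K :: "'g::group_add set"
  assumes subg: "is_subgroup K" and sa: "strong_atiyah K" and aK: "a \<in> group_ring K"
    and a0: "a \<noteq> (\<lambda>_. 0)" and xiV: "\<xi> \<in> mat_kernel K (\<lambda>_ _. a) 1 1"
  shows "\<xi> = (\<lambda>_. 0)"
proof -
  define V where "V = mat_kernel K (\<lambda>_ _. a) 1 1"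
  define \<delta> where "\<delta> = (delta_vec 0 :: 'g \<times> nat \<Rightarrow> complex)"
  have sd: "sqs \<delta>" unfolding \<delta>_def by (rule sqs_delta)
  note kp = kp_sq[where K=K and a=a] kp_zero[where K=K and a=a] kp_add[where K=K and a=a] kp_scale[where K=K and a=a] kp_closed[where K=K and a=a]
  have "\<exists>w\<in>V. \<forall>u\<in>V. l2_inner (\<lambda>p. \<delta> p - w p) u = 0"
    unfolding V_def by (rule proj_exists[OF kp(1) kp(2) kp(3) kp(4) kp(5) sd])
  then obtain w where wV: "w \<in> V" and orth: "\<And>u. u \<in> V \<Longrightarrow> l2_inner (\<lambda>p. \<delta> p - w p) u = 0"
    by blast
  have sw: "sqs w" using kp(1) wV unfolding V_def by blast
  have subV: "(\<lambda>p. u p - v p) \<in> V" if "u \<in> V" "v \<in> V" for u v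
  proof -
    have "(\<lambda>p. u p + (-1) * v p) \<in> V"
      using kp(3)[OF that(1)[unfolded V_def] kp(4)[OF that(2)[unfolded V_def], of "-1"]]
      unfolding V_def .
    thus ?thesis by simp
  qed
  have proj: "orth_proj V \<delta> = w"
    unfolding orth_proj_def
  proof (rule the_equality)
    show "w \<in> V \<and> (\<forall>u\<in>V. l2_inner (\<lambda>p. \<delta> p - w p) u = 0)" using wV orth by blast
    fix w' assume w': "w' \<in> V \<and> (\<forall>u\<in>V. l2_inner (\<lambda>p. \<delta> p - w' p) u = 0)"
    define e where "e = (\<lambda>p. w p - w' p)"
    have eV: "e \<in> V" unfolding e_def using subV wV w' by blast
    have sw': "sqs w'" using kp(1) w' unfolding V_def by blast
    have se: "sqs e" using kp(1) eV unfolding V_def by blast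
    have "l2_inner (\<lambda>p. \<delta> p - w' p) e - l2_inner (\<lambda>p. \<delta> p - w p) e =
          l2_inner (\<lambda>p. (\<delta> p - w' p) - (\<delta> p - w p)) e"
      using sd sw sw' se by (simp add: inner_diff_left sqs_diff)
    also have "(\<lambda>p. (\<delta> p - w' p) - (\<delta> p - w p)) = e" unfolding e_def by auto
    finally have "l2_inner e e = 0" using orth[OF eV] w' eV by simp
    hence "nrm e = 0" using inner_self[OF se] by simp
    hence "\<And>p. e p = 0" using nrm_zero_iff[OF se] by blast
    thus "w' = w" unfolding e_def by (auto simp: fun_eq_iff)
  qed
  have vd: "vn_dim 1 V = Re (w (0, 0))"
    unfolding vn_dim_def using proj by (simp add: \<delta>_def inner_delta)
  have "l2_inner (\<lambda>p. \<delta> p - w p) w = 0" using orth[OF wV] .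
  hence "l2_inner \<delta> w - l2_inner w w = 0" using sd sw by (simp add: inner_diff_left)
  hence "cnj (w (0, 0)) = of_real (nrm w)" using inner_self[OF sw] by (simp add: \<delta>_def delta_inner)
  hence w00: "w (0, 0) = of_real (nrm w)" by (metis complex_cnj_cnj complex_cnj_complex_of_real)
  have sdw: "sqs (\<lambda>p. \<delta> p - w p)" using sd sw by (rule sqs_diff)
  have "l2_inner (\<lambda>p. \<delta> p - w p) (\<lambda>p. \<delta> p - w p) =
        l2_inner (\<lambda>p. \<delta> p - w p) \<delta> - l2_inner (\<lambda>p. \<delta> p - w p) w"
    using sd sw sdw by (simp add: inner_diff_right)
  also have "\<dots> = 1 - w (0, 0)"
  proof -
    have "l2_inner (\<lambda>p. \<delta> p - w p) \<delta> = \<delta> (0, 0) - w (0, 0)" unfolding \<delta>_def by (rule inner_delta)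
    moreover have "\<delta> (0, 0) = 1" by (simp add: \<delta>_def delta_vec_def)
    moreover have "l2_inner (\<lambda>p. \<delta> p - w p) w = 0" by (rule orth[OF wV])
    ultimately show ?thesis by simp
  qed
  finally have "of_real (nrm (\<lambda>p. \<delta> p - w p)) = 1 - w (0, 0)" using inner_self[OF sdw] by simp
  hence ndw: "nrm (\<lambda>p. \<delta> p - w p) = 1 - nrm w" using w00
    by (metis of_real_1 of_real_diff of_real_eq_iff)
  have r0: "nrm w \<ge> 0" by (rule nrm_nonneg)
  have r1: "nrm w \<le> 1" using ndw nrm_nonneg[of "\<lambda>p. \<delta> p - w p"] by linarith
  have sa': "\<And>m n A. (\<forall>i<m. \<forall>j<n. A i j \<in> group_ring K) \<Longrightarrow> vn_dim n (mat_kernel K A m n) \<in> \<int>"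
    using sa unfolding strong_atiyah_def by blast
  have "vn_dim 1 V \<in> \<int>" unfolding V_def by (rule sa') (use aK in simp)
  hence "nrm w \<in> \<int>" using vd w00 by simp
  then obtain k where k: "nrm w = of_int k" by (auto elim: Ints_cases)
  hence "k = 0 \<or> k = 1" using r0 r1 by linarith
  thus ?thesis
  proof
    assume "k = 1"
    hence "nrm (\<lambda>p. \<delta> p - w p) = 0" using ndw k by simp
    hence "\<And>p. \<delta> p - w p = 0" using nrm_zero_iff[OF sdw] by blast
    hence "w = \<delta>" by (auto simp: fun_eq_iff)
    hence dV: "\<delta> \<in> V" using wV by simp
    have "a x = 0" for x
    proof (cases "x \<in> K")
      case True
      have "mat_mult (\<lambda>_ _. a) 1 \<delta> (x, 0) = 0" using dV True unfolding V_def mat_kernel_def by auto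
      moreover have "mat_mult (\<lambda>_ _. a) 1 \<delta> (x, 0) = (\<Sum>g\<in>{g. a g \<noteq> 0}. if g = x then a g else 0)"
        unfolding mat_mult_11 by (intro sum.cong) (auto simp: \<delta>_def delta_vec_def add_eq_0_iff)
      moreover have "(\<Sum>g\<in>{g. a g \<noteq> 0}. if g = x then a g else 0) = a x"
        using aK unfolding group_ring_def by (auto simp: sum.delta)
      ultimately show ?thesis by simp
    next
      case False thus ?thesis using aK unfolding group_ring_def by auto
    qed
    thus ?thesis using a0 by auto
  next
    assume "k = 0"
    hence "nrm w = 0" using k by simp
    hence "\<And>p. w p = 0" using nrm_zero_iff[OF sw] by blast
    hence "w = (\<lambda>_. 0)" by auto
    hence o2: "\<And>u. u \<in> V \<Longrightarrow> u (0, 0) = 0"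
      using orth by (simp add: \<delta>_def delta_inner)
    have xiV': "\<xi> \<in> V" using xiV unfolding V_def .
    have "\<xi> (h, 0) = 0" if hK: "h \<in> K" for h
    proof -
      define \<rho> where "\<rho> = (\<lambda>(y, i). \<xi> (y + h, i))"
      define T where "T = (\<lambda>(y::'g, i::nat). (y + h, i))"
      have injT: "inj T" unfolding T_def by (auto simp: inj_def)
      have surjT: "range T = UNIV" unfolding T_def
        by (auto simp: image_def) (metis add.assoc add.right_inverse add_0_right)
      have "sqs \<xi>" using kp(1) xiV' unfolding V_def by blast
      hence "(\<lambda>p. (cmod (\<xi> p))\<^sup>2) summable_on range T" unfolding sqs_def surjT .
      hence "((\<lambda>p. (cmod (\<xi> p))\<^sup>2) \<circ> T) summable_on UNIV" using summable_on_reindex[OF injT] by blast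
      hence s\<rho>: "sqs \<rho>" unfolding sqs_def \<rho>_def T_def by (simp add: o_def case_prod_beta)
      have supp: "y \<in> K \<and> i < 1" if "\<rho> (y, i) \<noteq> 0" for y i
      proof -
        have "y + h \<in> K \<and> i < 1" using xiV' that unfolding \<rho>_def V_def mat_kernel_def l2n_def by auto
        hence "(y + h) + - h \<in> K" "i < 1" using subg hK unfolding is_subgroup_def by blast+
        thus ?thesis by (simp add: add.assoc)
      qed
      have "mat_mult (\<lambda>_ _. a) 1 \<rho> (x, 0) = 0" if "x \<in> K" for x
      proof -
        have "x + h \<in> K" using subg that hK unfolding is_subgroup_def by blast
        hence "mat_mult (\<lambda>_ _. a) 1 \<xi> (x + h, 0) = 0" using xiV' unfolding V_def mat_kernel_def by auto
        thus ?thesis unfolding mat_mult_11 \<rho>_def by (simp add: add.assoc)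
      qed
      hence "\<rho> \<in> V" using supp s\<rho> unfolding V_def mat_kernel_def l2n_def sqs_def by auto
      hence "\<rho> (0, 0) = 0" by (rule o2)
      thus ?thesis unfolding \<rho>_def by simp
    qed
    hence A: "\<And>h. h \<in> K \<Longrightarrow> \<xi> (h, 0) = 0" .
    have B: "\<xi> (y, i) = 0" if "\<not> (y \<in> K \<and> i = 0)" for y i
      using xiV that unfolding mat_kernel_def l2n_def by auto
    have "\<xi> (y, i) = 0" for y i
    proof (cases "y \<in> K \<and> i = 0")
      case True thus ?thesis using A by auto
    next
      case False thus ?thesis using B by blast
    qed
    thus ?thesis by (auto simp: fun_eq_iff)
  qed
qed

lemma group_nbhd:
  fixes U :: "'g::topological_group_add set"
  assumes "open U" "0 \<in> U"
  shows "\<exists>W. open W \<and> z \<in> W \<and> (\<forall>w1\<in>W. \<forall>w2\<in>W. w2 + - w1 \<in> U)"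
proof -
  let ?\<psi> = "\<lambda>p::'g \<times> 'g. snd p + - fst p"
  have "continuous_on UNIV ?\<psi>" by (intro continuous_intros)
  hence "open (?\<psi> -` U \<inter> UNIV)" using assms(1) continuous_on_open_vimage[of UNIV ?\<psi>] by blast
  hence o: "open (?\<psi> -` U)" by simp
  have zz: "(z, z) \<in> ?\<psi> -` U" using assms by simp
  obtain A B where "open A" "open B" "(z, z) \<in> A \<times> B" "A \<times> B \<subseteq> ?\<psi> -` U"
    by (rule open_prod_elim[OF o zz])
  thus ?thesis by (intro exI[of _ "A \<inter> B"]) auto
qed

lemma countable_cover:
  fixes W :: "'g::topological_space \<Rightarrow> 'g set"
  assumes "sigma_compact_type TYPE('g)" "\<And>z. open (W z)" "\<And>z. z \<in> W z"
  shows "\<exists>Z. countable Z \<and> (\<Union>z\<in>Z. W z) = UNIV"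
proof -
  obtain C :: "nat \<Rightarrow> 'g set" where C: "\<And>n. compact (C n)" "(\<Union>n. C n) = UNIV"
    using assms(1) unfolding sigma_compact_type_def by blast
  have "\<exists>F. finite F \<and> C n \<subseteq> (\<Union>z\<in>F. W z)" for n
  proof -
    have cov: "C n \<subseteq> (\<Union>z\<in>C n. W z)" using assms(3) by blast
    have op: "\<And>T. T \<in> C n \<Longrightarrow> open (W T)" using assms(2) by blast
    obtain F where "F \<subseteq> C n" "finite F" "C n \<subseteq> (\<Union>z\<in>F. W z)"
      by (rule compactE_image[OF C(1) op cov])
    thus ?thesis by blast
  qed
  hence "\<forall>n. \<exists>F. finite F \<and> C n \<subseteq> (\<Union>z\<in>F. W z)" by blast
  from choice[OF this] obtain F where F0: "\<forall>n. finite (F n) \<and> C n \<subseteq> (\<Union>z\<in>F n. W z)" by blast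
  hence F: "\<And>n. finite (F n)" "\<And>n. C n \<subseteq> (\<Union>z\<in>F n. W z)" by auto
  have "countable (\<Union>n. F n)" using F(1) by (intro countable_UN) (auto intro: countable_finite)
  moreover have "(\<Union>z\<in>(\<Union>n. F n). W z) = UNIV"
  proof -
    have "x \<in> (\<Union>z\<in>(\<Union>n. F n). W z)" for x
    proof -
      obtain n where "x \<in> C n" using C(2) by blast
      thus ?thesis using F(2)[of n] by blast
    qed
    thus ?thesis by blast
  qed
  ultimately show ?thesis by blast
qed

lemma space_borel_eq: "sets \<mu> = sets borel \<Longrightarrow> space \<mu> = UNIV"
  using sets_eq_imp_space_eq by fastforce

lemma transl_meas:
  fixes \<mu> :: "'g::topological_group_add measure"
  assumes "sets \<mu> = sets borel"
  shows "(\<lambda>x. g + x) \<in> measurable \<mu> \<mu>"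
proof -
  have "(\<lambda>x::'g. g + x) \<in> borel_measurable borel"
    by (intro borel_measurable_continuous_onI continuous_intros)
  thus ?thesis using measurable_cong_sets[OF assms assms] by simp
qed

lemma transl_preimage:
  fixes g :: "'g::group_add"
  shows "(\<lambda>x. g + x) -` A = (\<lambda>x. - g + x) ` A"
proof (intro set_eqI iffI)
  fix x assume "x \<in> (\<lambda>x. g + x) -` A"
  hence "g + x \<in> A" by simp
  moreover have "x = - g + (g + x)" by (simp add: add.assoc[symmetric])
  ultimately show "x \<in> (\<lambda>x. - g + x) ` A" by blast
next
  fix x assume "x \<in> (\<lambda>x. - g + x) ` A"
  then obtain y where "y \<in> A" "x = - g + y" by blast
  thus "x \<in> (\<lambda>x. g + x) -` A" by (simp add: add.assoc[symmetric])
qed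

lemma haar_sets: "left_haar_measure \<mu> \<Longrightarrow> sets \<mu> = sets borel"
  unfolding left_haar_measure_def by (rule conjunct1)

lemma haar_inv:
  assumes "left_haar_measure \<mu>" "A \<in> sets borel"
  shows "emeasure \<mu> ((\<lambda>x. g + x) ` A) = emeasure \<mu> A"
proof -
  have "\<forall>g A. A \<in> sets borel \<longrightarrow> emeasure \<mu> ((\<lambda>x. g + x) ` A) = emeasure \<mu> A"
    using assms(1) unfolding left_haar_measure_def by (rule conjunct1[OF conjunct2])
  thus ?thesis using assms(2) by blast
qed

lemma haar_distr:
  fixes \<mu> :: "'g::{topological_group_add,t2_space} measure"
  assumes H: "left_haar_measure \<mu>"
  shows "distr \<mu> \<mu> (\<lambda>x. g + x) = \<mu>"
proof (rule measure_eqI)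
  have sb: "sets \<mu> = sets borel" using H by (rule haar_sets)
  show "sets (distr \<mu> \<mu> (\<lambda>x. g + x)) = sets \<mu>" by simp
  fix A assume "A \<in> sets (distr \<mu> \<mu> (\<lambda>x. g + x))"
  hence A: "A \<in> sets \<mu>" by simp
  have "emeasure (distr \<mu> \<mu> (\<lambda>x. g + x)) A = emeasure \<mu> ((\<lambda>x. g + x) -` A \<inter> space \<mu>)"
    by (rule emeasure_distr[OF transl_meas[OF sb] A])
  also have "\<dots> = emeasure \<mu> ((\<lambda>x. - g + x) ` A)"
    using space_borel_eq[OF sb] by (simp add: transl_preimage)
  also have "\<dots> = emeasure \<mu> A" using haar_inv[OF H, of A "- g"] A sb by simp
  finally show "emeasure (distr \<mu> \<mu> (\<lambda>x. g + x)) A = emeasure \<mu> A" .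
qed

lemma haar_null:
  fixes \<mu> :: "'g::{topological_group_add,t2_space} measure"
  assumes H: "left_haar_measure \<mu>" and N: "N \<in> null_sets \<mu>"
  shows "(\<lambda>x. g + x) -` N \<in> null_sets \<mu>"
proof -
  have sb: "sets \<mu> = sets borel" using H by (rule haar_sets)
  have Ns: "N \<in> sets \<mu>" using N by blast
  have m: "(\<lambda>x. g + x) -` N \<in> sets \<mu>"
    using measurable_sets[OF transl_meas[OF sb] Ns] space_borel_eq[OF sb] by simp
  have "emeasure \<mu> ((\<lambda>x. g + x) -` N) = emeasure (distr \<mu> \<mu> (\<lambda>x. g + x)) N"
    using emeasure_distr[OF transl_meas[OF sb] Ns] space_borel_eq[OF sb] by simp
  also have "\<dots> = 0" using haar_distr[OF H] N by (simp add: null_setsD1)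
  finally show ?thesis using m by blast
qed

lemma haar_nn:
  fixes \<mu> :: "'g::{topological_group_add,t2_space} measure"
  assumes H: "left_haar_measure \<mu>" and h: "h \<in> borel_measurable \<mu>"
  shows "(\<integral>\<^sup>+x. h (g + x) \<partial>\<mu>) = (\<integral>\<^sup>+x. h x \<partial>\<mu>)"
proof -
  have sb: "sets \<mu> = sets borel" using H by (rule haar_sets)
  have "integral\<^sup>N (distr \<mu> \<mu> (\<lambda>x. g + x)) h = (\<integral>\<^sup>+x. h (g + x) \<partial>\<mu>)"
    by (rule nn_integral_distr[OF transl_meas[OF sb]]) (use h in simp)
  thus ?thesis using haar_distr[OF H] by simp
qed

lemma fibers_l2:
  fixes \<mu> :: "'g::{topological_group_add,t2_space} measure" and K :: "'g set" and f :: "'g \<Rightarrow> complex"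
  assumes sc: "sigma_compact_type TYPE('g)" and H: "left_haar_measure \<mu>"
    and subg: "is_subgroup K" and disc: "discrete_subset K"
    and fm: "f \<in> borel_measurable \<mu>" and fi: "integrable \<mu> (\<lambda>x. (cmod (f x))\<^sup>2)"
  shows "countable K \<and> (AE x in \<mu>. (\<lambda>y. (cmod (f (y + x)))\<^sup>2) summable_on K)"
proof -
  have sb: "sets \<mu> = sets borel" using H by (rule haar_sets)
  have sp: "space \<mu> = UNIV" using sb by (rule space_borel_eq)
  have K0: "0 \<in> K" using subg unfolding is_subgroup_def by blast
  obtain U where Uo: "open U" and UK: "U \<inter> K = {0}" using disc K0 unfolding discrete_subset_def by blast
  have U0: "0 \<in> U" using UK by blast
  define P where "P W z \<longleftrightarrow> open W \<and> z \<in> W \<and> (\<forall>w1\<in>W. \<forall>w2\<in>W. w2 + - w1 \<in> U)" for W z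
  define W where "W z = (SOME W. P W z)" for z
  have WP: "P (W z) z" for z
    unfolding W_def using group_nbhd[OF Uo U0, of z] unfolding P_def[symmetric] by (rule someI_ex)
  have Wo: "\<And>z. open (W z)" and Wz: "\<And>z. z \<in> W z"
    and Wu: "\<And>z w1 w2. w1 \<in> W z \<Longrightarrow> w2 \<in> W z \<Longrightarrow> w2 + - w1 \<in> U"
    using WP unfolding P_def by blast+
  have inK: "-g2 + g1 \<in> K" if "g1 \<in> K" "g2 \<in> K" for g1 g2
    using subg that unfolding is_subgroup_def by blast
  have key: "g1 = g2" if g: "g1 \<in> K" "g2 \<in> K" and w: "w1 \<in> W z" "w2 \<in> W z"
    and eq: "g1 + w1 = g2 + w2" for g1 g2 w1 w2 z
  proof -
    have "-g2 + g1 = -g2 + (g1 + w1) + -w1" by (simp add: add.assoc[symmetric])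
    also have "\<dots> = -g2 + (g2 + w2) + -w1" using eq by simp
    also have "\<dots> = w2 + -w1" by (simp add: add.assoc[symmetric])
    finally have "-g2 + g1 \<in> U" using Wu[OF w] by simp
    hence "-g2 + g1 \<in> U \<inter> K" using inK[OF g] by blast
    hence "-g2 + g1 = 0" using UK by blast
    thus ?thesis by (simp add: add_eq_0_iff)
  qed
  have sub1: "k1 = k2" if "k1 \<in> K \<inter> W z" "k2 \<in> K \<inter> W z" for k1 k2 z
  proof -
    have "k2 + - k1 \<in> U" using Wu that by blast
    moreover have "k2 + - k1 \<in> K" using subg that unfolding is_subgroup_def by blast
    ultimately have "k2 + - k1 = 0" using UK by blast
    thus ?thesis by (simp add: add_eq_0_iff)
  qed
  obtain Z where cZ: "countable Z" and Zc: "(\<Union>z\<in>Z. W z) = UNIV"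
    using countable_cover[OF sc Wo Wz] by blast
  have finKW: "finite (K \<inter> W z)" for z
  proof (cases "K \<inter> W z = {}")
    case False
    then obtain k where k: "k \<in> K \<inter> W z" by blast
    hence "K \<inter> W z \<subseteq> {k}" using sub1 by blast
    thus ?thesis by (rule finite_subset) simp
  qed simp
  have cK: "countable K"
  proof -
    have "K \<subseteq> (\<Union>z\<in>Z. K \<inter> W z)" using Zc by blast
    moreover have "countable (\<Union>z\<in>Z. K \<inter> W z)"
      using cZ finKW by (intro countable_UN) (auto intro: countable_finite)
    ultimately show ?thesis by (rule countable_subset)
  qed
  have fT[measurable]: "(\<lambda>x. f (g + x)) \<in> borel_measurable \<mu>" for g
    using measurable_comp[OF transl_meas[OF sb] fm] by (simp add: o_def)
  have fm'[measurable]: "f \<in> borel_measurable \<mu>" by (rule fm)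
  have Wm[measurable]: "W z \<in> sets \<mu>" for z using Wo sb by simp
  have AEs: "AE x in \<mu>. (\<lambda>y. (cmod (f (y + x)))\<^sup>2) summable_on K"
  proof (cases "finite K")
    case True thus ?thesis by simp
  next
    case False
    define e where "e = from_nat_into K"
    have be: "bij_betw e UNIV K" unfolding e_def using bij_betw_from_nat_into[OF cK False] .
    have inje: "inj e" and re: "range e = K" using be by (auto simp: bij_betw_def)
    have eK: "e i \<in> K" for i using re by blast
    have fint: "(\<integral>\<^sup>+ y. ennreal ((cmod (f y))\<^sup>2) \<partial>\<mu>) < \<infinity>"
      using integrableD(2)[OF fi] by (simp add: less_top)
    have AEz: "AE x in \<mu>. x \<in> W z \<longrightarrow> (\<Sum>i. ennreal ((cmod (f (e i + x)))\<^sup>2)) \<noteq> \<infinity>" for z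
    proof -
      define A where "A i = {y. - e i + y \<in> W z}" for i
      have Am[measurable]: "A i \<in> sets \<mu>" for i
      proof -
        have "(\<lambda>y. - e i + y) -` W z \<inter> space \<mu> \<in> sets \<mu>"
          by (rule measurable_sets[OF transl_meas[OF sb] Wm])
        thus ?thesis unfolding A_def sp by (simp add: vimage_def)
      qed
      have disj: "disjoint_family A"
        unfolding disjoint_family_on_def
      proof (intro ballI impI)
        fix i j :: nat assume ij: "i \<noteq> j"
        show "A i \<inter> A j = {}"
        proof (rule ccontr)
          assume "A i \<inter> A j \<noteq> {}"
          then obtain y where y: "- e i + y \<in> W z" "- e j + y \<in> W z" unfolding A_def by blast
          have "e i + (- e i + y) = e j + (- e j + y)" by (simp add: add.assoc[symmetric])
          hence "e i = e j" using key[OF eK eK y] by blast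
          thus False using inje ij by (auto dest: injD)
        qed
      qed
      have step1: "(\<integral>\<^sup>+x. ennreal ((cmod (f (e i + x)))\<^sup>2) * indicator (W z) x \<partial>\<mu>) =
                   (\<integral>\<^sup>+y. ennreal ((cmod (f y))\<^sup>2) * indicator (A i) y \<partial>\<mu>)" for i
      proof -
        have hm: "(\<lambda>y. ennreal ((cmod (f y))\<^sup>2) * indicator (A i) y) \<in> borel_measurable \<mu>" by measurable
        have "(\<integral>\<^sup>+x. ennreal ((cmod (f (e i + x)))\<^sup>2) * indicator (A i) (e i + x) \<partial>\<mu>) =
              (\<integral>\<^sup>+y. ennreal ((cmod (f y))\<^sup>2) * indicator (A i) y \<partial>\<mu>)"
          by (rule haar_nn[OF H hm])
        moreover have "indicator (A i) (e i + x) = (indicator (W z) x :: ennreal)" for x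
          unfolding A_def by (simp add: add.assoc[symmetric] indicator_def)
        ultimately show ?thesis by simp
      qed
      have "(\<integral>\<^sup>+x. (\<Sum>i. ennreal ((cmod (f (e i + x)))\<^sup>2) * indicator (W z) x) \<partial>\<mu>) =
            (\<Sum>i. \<integral>\<^sup>+x. ennreal ((cmod (f (e i + x)))\<^sup>2) * indicator (W z) x \<partial>\<mu>)"
        by (rule nn_integral_suminf) measurable
      also have "\<dots> = (\<Sum>i. \<integral>\<^sup>+y. ennreal ((cmod (f y))\<^sup>2) * indicator (A i) y \<partial>\<mu>)"
        using step1 by simp
      also have "\<dots> = (\<integral>\<^sup>+y. (\<Sum>i. ennreal ((cmod (f y))\<^sup>2) * indicator (A i) y) \<partial>\<mu>)"
        by (rule nn_integral_suminf[symmetric]) measurable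
      also have "\<dots> = (\<integral>\<^sup>+y. ennreal ((cmod (f y))\<^sup>2) * indicator (\<Union>i. A i) y \<partial>\<mu>)"
        using suminf_indicator[OF disj] by simp
      also have "\<dots> \<le> (\<integral>\<^sup>+y. ennreal ((cmod (f y))\<^sup>2) \<partial>\<mu>)"
        by (intro nn_integral_mono) (simp add: indicator_def)
      also have "\<dots> < \<infinity>" by (rule fint)
      finally have fin: "(\<integral>\<^sup>+x. (\<Sum>i. ennreal ((cmod (f (e i + x)))\<^sup>2) * indicator (W z) x) \<partial>\<mu>) \<noteq> \<infinity>"
        by simp
      have "AE x in \<mu>. (\<Sum>i. ennreal ((cmod (f (e i + x)))\<^sup>2) * indicator (W z) x) \<noteq> \<infinity>"
        by (rule nn_integral_PInf_AE[OF _ fin]) measurable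
      thus ?thesis by eventually_elim (auto simp: indicator_def)
    qed
    have "AE x in \<mu>. \<forall>z\<in>Z. x \<in> W z \<longrightarrow> (\<Sum>i. ennreal ((cmod (f (e i + x)))\<^sup>2)) \<noteq> \<infinity>"
      by (subst AE_ball_countable[OF cZ]) (use AEz in blast)
    thus ?thesis
    proof eventually_elim
      case (elim x)
      obtain z where "z \<in> Z" "x \<in> W z" using Zc by blast
      hence "(\<Sum>i. ennreal ((cmod (f (e i + x)))\<^sup>2)) \<noteq> \<infinity>" using elim by blast
      hence "summable (\<lambda>i. (cmod (f (e i + x)))\<^sup>2)" by (intro summable_suminf_not_top) auto
      hence "(\<lambda>i. (cmod (f (e i + x)))\<^sup>2) summable_on UNIV"
        by (subst summable_on_UNIV_nonneg_real_iff) auto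
      hence "((\<lambda>y. (cmod (f (y + x)))\<^sup>2) \<circ> e) summable_on UNIV" by (simp add: o_def)
      hence "(\<lambda>y. (cmod (f (y + x)))\<^sup>2) summable_on (range e)"
        using summable_on_reindex[OF inje] by blast
      thus ?case using re by simp
    qed
  qed
  show ?thesis using cK AEs by blast
qed

theorem theorem1p2:
  fixes \<mu> :: "'g::{topological_group_add,t2_space} measure"
    and K :: "'g set"
    and f :: "'g \<Rightarrow> complex"
  assumes "locally_compact_space (euclidean :: 'g topology)"
    and "sigma_compact_type TYPE('g)"
    and "left_haar_measure \<mu>"
    and "is_subgroup K" and "discrete_subset K" and "torsion_free K"
    and "strong_atiyah K"
    and "f \<in> borel_measurable \<mu>" and "integrable \<mu> (\<lambda>x. (cmod (f x))\<^sup>2)"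
    and "\<not> (AE x in \<mu>. f x = 0)"
  shows "\<forall>(n::nat) (k :: nat \<Rightarrow> 'g) (c :: nat \<Rightarrow> complex).
           (\<forall>j<n. k j \<in> K) \<and> inj_on k {..<n} \<and> (\<exists>j<n. c j \<noteq> 0) \<longrightarrow>
           \<not> (AE x in \<mu>. (\<Sum>j<n. c j * f (- k j + x)) = 0)"
proof (intro allI impI notI, elim conjE)
  fix n :: nat and k :: "nat \<Rightarrow> 'g" and c :: "nat \<Rightarrow> complex"
  assume kK: "\<forall>j<n. k j \<in> K" and injk: "inj_on k {..<n}" and cnz: "\<exists>j<n. c j \<noteq> 0"
    and AEz: "AE x in \<mu>. (\<Sum>j<n. c j * f (- k j + x)) = 0"
  note H = assms(3) and subg = assms(4) and sa = assms(7)
  have sb: "sets \<mu> = sets borel" using H by (rule haar_sets)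
  have sp: "space \<mu> = UNIV" using sb by (rule space_borel_eq)
  define a where "a g = (\<Sum>j\<in>{j. j < n \<and> k j = g}. c j)" for g
  have a_k: "a (k j) = c j" if "j < n" for j
  proof -
    have "{j'. j' < n \<and> k j' = k j} = {j}"
    proof (intro set_eqI iffI)
      fix j' assume "j' \<in> {j'. j' < n \<and> k j' = k j}"
      hence j': "j' < n" "k j' = k j" by auto
      have "j' = j" using inj_onD[OF injk j'(2)] j'(1) that by simp
      thus "j' \<in> {j}" by simp
    next
      fix j' assume "j' \<in> {j}" thus "j' \<in> {j'. j' < n \<and> k j' = k j}" using that by simp
    qed
    thus ?thesis unfolding a_def by simp
  qed
  have supp_a: "{g. a g \<noteq> 0} \<subseteq> k ` {..<n}"
  proof
    fix g assume g: "g \<in> {g. a g \<noteq> 0}"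
    show "g \<in> k ` {..<n}"
    proof (rule ccontr)
      assume "g \<notin> k ` {..<n}"
      hence "{j. j < n \<and> k j = g} = {}" by auto
      hence "a g = 0" unfolding a_def by (simp only: sum.empty)
      thus False using g by simp
    qed
  qed
  have aK: "a \<in> group_ring K"
  proof -
    have "finite {g. a g \<noteq> 0}" by (rule finite_subset[OF supp_a]) simp
    moreover have "{g. a g \<noteq> 0} \<subseteq> K" using supp_a kK by fastforce
    ultimately show ?thesis unfolding group_ring_def by simp
  qed
  obtain j0 where j0: "j0 < n" "c j0 \<noteq> 0" using cnz by blast
  have a0: "a \<noteq> (\<lambda>_. 0)"
  proof
    assume "a = (\<lambda>_. 0)"
    hence "a (k j0) = 0" by simp
    thus False using a_k[OF j0(1)] j0(2) by simp
  qed
  have conv: "(\<Sum>g\<in>{g. a g \<noteq> 0}. a g * h g) = (\<Sum>j<n. c j * h (k j))" for h :: "'g \<Rightarrow> complex"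
  proof -
    have "(\<Sum>g\<in>{g. a g \<noteq> 0}. a g * h g) = (\<Sum>g\<in>k ` {..<n}. a g * h g)"
      by (rule sum.mono_neutral_left) (use supp_a in auto)
    also have "\<dots> = (\<Sum>j<n. a (k j) * h (k j))"
      by (subst sum.reindex[OF injk]) simp
    also have "\<dots> = (\<Sum>j<n. c j * h (k j))" by (intro sum.cong) (auto simp: a_k)
    finally show ?thesis .
  qed
  from AEz obtain N where N1: "{x \<in> space \<mu>. \<not> (\<Sum>j<n. c j * f (- k j + x)) = 0} \<subseteq> N"
    and N2: "emeasure \<mu> N = 0" and N3: "N \<in> sets \<mu>"
    by (rule AE_E)
  have Nn: "N \<in> null_sets \<mu>" using N2 N3 by blast
  have fl: "countable K \<and> (AE x in \<mu>. (\<lambda>y. (cmod (f (y + x)))\<^sup>2) summable_on K)"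
    by (rule fibers_l2[OF assms(2) H subg assms(5) assms(8) assms(9)])
  define B where "B = (\<Union>y\<in>K. (\<lambda>x. y + x) -` N)"
  have Bn: "B \<in> null_sets \<mu>" unfolding B_def
    using fl by (intro null_sets_UN' haar_null[OF H Nn]) auto
  have "AE x in \<mu>. f x = 0"
    using AE_not_in[OF Bn] conjunct2[OF fl]
  proof eventually_elim
    case (elim x)
    define \<xi> where "\<xi> = (\<lambda>(y, i). if i = (0::nat) \<and> y \<in> K then f (y + x) else 0)"
    have supp: "\<forall>y i. \<xi> (y, i) \<noteq> 0 \<longrightarrow> y \<in> K \<and> i = 0" unfolding \<xi>_def by auto
    have sq: "sqs \<xi>"
    proof -
      have inj0: "inj_on (\<lambda>y::'g. (y, 0::nat)) K" by (auto simp: inj_on_def)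
      have "((\<lambda>p. (cmod (\<xi> p))\<^sup>2) \<circ> (\<lambda>y. (y, 0::nat))) summable_on K"
        using elim(2) by (rule summable_on_cong[THEN iffD1, rotated]) (simp add: \<xi>_def)
      hence "(\<lambda>p. (cmod (\<xi> p))\<^sup>2) summable_on ((\<lambda>y. (y, 0::nat)) ` K)"
        using summable_on_reindex[OF inj0] by blast
      moreover have "(\<lambda>p. (cmod (\<xi> p))\<^sup>2) summable_on ((\<lambda>y. (y, 0::nat)) ` K) \<longleftrightarrow>
                     (\<lambda>p. (cmod (\<xi> p))\<^sup>2) summable_on UNIV"
        by (rule summable_on_cong_neutral[where S="(\<lambda>y. (y, 0::nat)) ` K" and T=UNIV])
           (auto simp: \<xi>_def image_iff)
      ultimately show ?thesis unfolding sqs_def by simp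
    qed
    have mm: "\<forall>y\<in>K. mat_mult (\<lambda>_ _. a) 1 \<xi> (y, 0) = 0"
    proof
      fix y assume yK: "y \<in> K"
      have ny: "y + x \<notin> N" using elim(1) yK unfolding B_def by blast
      have "mat_mult (\<lambda>_ _. a) 1 \<xi> (y, 0) = (\<Sum>j<n. c j * \<xi> (- k j + y, 0))"
        unfolding mat_mult_11 by (rule conv)
      also have "\<dots> = (\<Sum>j<n. c j * f (- k j + (y + x)))"
      proof (intro sum.cong refl)
        fix j assume "j \<in> {..<n}"
        hence "- k j + y \<in> K" using kK yK subg unfolding is_subgroup_def by blast
        thus "c j * \<xi> (- k j + y, 0) = c j * f (- k j + (y + x))"
          unfolding \<xi>_def by (simp add: add.assoc)
      qed
      also have "\<dots> = 0" using N1 ny sp by blast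
      finally show "mat_mult (\<lambda>_ _. a) 1 \<xi> (y, 0) = 0" .
    qed
    have "\<xi> \<in> mat_kernel K (\<lambda>_ _. a) 1 1" unfolding memV using supp sq mm by blast
    hence "\<xi> = (\<lambda>_. 0)" by (rule atiyah_kernel[OF subg sa aK a0])
    hence "\<xi> (0, 0) = 0" by simp
    moreover have "0 \<in> K" using subg unfolding is_subgroup_def by blast
    ultimately show "f x = 0" unfolding \<xi>_def by simp
  qed
  thus False using assms(10) by blast
qed

end
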